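(* For every integer $q\ge 11$ there exists an $\mathcal{SOS}_q(3)$ of period $\frac{q^3-6q^2+2q}{2}$ if $q\equiv 0\pmod 4$, $\frac{q^3-6q^2-q}{2}$ if $q\equiv 1\pmod 4$, $\frac{q^3-8q^2+6q}{2}$ if $q\equiv 2\pmod 4$, and $\frac{q^3-4q^2-3q}{2}$ if $q\equiv 3\pmod 4$.
   Context: For a periodic sequence $S=(s_i)$ over $\mathbb{Z}_q$ write $\mathbf{s}_n(i)=(s_i,\ldots,s_{i+n-1})$; $\mathbf{u}^R$ denotes the reverse of a tuple and $-\mathbf{u}$ its termwise negative. An $\mathcal{SOS}_q(n)$ is a periodic sequence of period $m$ over $\mathbb{Z}_q$ such that $\mathbf{s}_n(i)=\mathbf{s}_n(j)$ implies $i\equiv j\pmod m$, and $\mathbf{s}_n(i)\neq\mathbf{s}_n(j)^R$ and $\mathbf{s}_n(i)\neq-\mathbf{s}_n(j)^R$ for all $i,j$. *)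

theory Defs
  imports Main
begin

text \<open>A sequence over Z_q is modelled as s :: nat => int with values in {0..<q}.
  The window s_n(i) = (s_i,...,s_{i+n-1}) is a list.\<close>

definition window :: "(nat \<Rightarrow> int) \<Rightarrow> nat \<Rightarrow> nat \<Rightarrow> int list" where
  "window s n i = map (\<lambda>k. s (i + k)) [0..<n]"

definition negq :: "int \<Rightarrow> int list \<Rightarrow> int list" where
  "negq q u = map (\<lambda>x. (- x) mod q) u"

definition periodic_seq :: "int \<Rightarrow> (nat \<Rightarrow> int) \<Rightarrow> nat \<Rightarrow> bool" where
  "periodic_seq q s m \<longleftrightarrow> m > 0 \<and> (\<forall>i. s i \<in> {0..<q}) \<and> (\<forall>i. s (i + m) = s i)"

definition is_SOS :: "int \<Rightarrow> nat \<Rightarrow> (nat \<Rightarrow> int) \<Rightarrow> nat \<Rightarrow> bool" where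
  "is_SOS q n s m \<longleftrightarrow> periodic_seq q s m
     \<and> (\<forall>i j. window s n i = window s n j \<longrightarrow> i mod m = j mod m)
     \<and> (\<forall>i j. window s n i \<noteq> rev (window s n j)
             \<and> window s n i \<noteq> rev (negq q (window s n j)))"

end

theory Submission
  imports Defs "Graph_Theory.Euler"
begin

definition bad :: "int \<Rightarrow> int \<Rightarrow> bool" where
  "bad q x \<longleftrightarrow> x mod q = 0 \<or> 2 * (x mod q) = q"
definition ps :: "int \<Rightarrow> int \<Rightarrow> bool" where
  "ps q x \<longleftrightarrow> 0 < x mod q \<and> 2 * (x mod q) < q"
definition av :: "int \<Rightarrow> int \<Rightarrow> int" where
  "av q x = min (x mod q) (q - x mod q)"

lemma modr: "0 < (q::int) \<Longrightarrow> -q \<le> x \<Longrightarrow> x < 2*q \<Longrightarrow> x mod q = (if x < 0 then x + q else if x < q then x else x - q)"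
proof -
  assume q: "0 < q" "-q \<le> x" "x < 2*q"
  show ?thesis
  proof (cases "x < 0")
    case True
    have "x mod q = (x + q) mod q" by (metis mod_add_self2)
    also have "\<dots> = x + q" using q True by (intro mod_pos_pos_trivial) auto
    finally show ?thesis using True by simp
  next
    case False
    show ?thesis
    proof (cases "x < q")
      case True then show ?thesis using False by simp
    next
      case F2: False
      have "x mod q = (x - q) mod q" by (metis diff_add_cancel mod_add_self2)
      also have "\<dots> = x - q" using q F2 by (intro mod_pos_pos_trivial) auto
      finally show ?thesis using False F2 by simp
    qed
  qed
qed

lemma negmod: "(- (x::int)) mod q = (if x mod q = 0 then 0 else q - x mod q)"
  by (rule zmod_zminus1_eq_if)

lemma bad_cong: "(x::int) mod q = y mod q \<Longrightarrow> bad q x = bad q y" by (simp add: bad_def)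
lemma ps_cong: "(x::int) mod q = y mod q \<Longrightarrow> ps q x = ps q y" by (simp add: ps_def)
lemma av_cong: "(x::int) mod q = y mod q \<Longrightarrow> av q x = av q y" by (simp add: av_def)

lemma bad_neg: "bad q (- x) = bad q x" if q: "0 < q"
proof -
  have r: "0 \<le> x mod q" "x mod q < q" using q by auto
  show ?thesis unfolding bad_def negmod using r by auto
qed
lemma av_neg: "av q (- x) = av q x" if q: "0 < q"
proof -
  have r: "0 \<le> x mod q" "x mod q < q" using q by auto
  show ?thesis unfolding av_def negmod using r by auto
qed
lemma ps_neg: "\<not> bad q x \<Longrightarrow> ps q (- x) = (\<not> ps q x)" if q: "0 < q"
proof -
  have r: "0 \<le> x mod q" "x mod q < q" using q by auto
  show "\<not> bad q x \<Longrightarrow> ?thesis" unfolding bad_def ps_def negmod using r by auto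
qed
lemma av_rng: "\<not> bad q x \<Longrightarrow> 1 \<le> av q x \<and> 2 * av q x < q" if q: "0 < q"
proof -
  have r: "0 \<le> x mod q" "x mod q < q" using q by auto
  show "\<not> bad q x \<Longrightarrow> ?thesis" unfolding bad_def av_def using r by (auto simp: min_def)
qed

lemma red:
  fixes a b q :: int
  assumes "0 \<le> a" "a < q" "0 \<le> b" "b < q"
  shows "(b - a) mod q = (if b < a then b - a + q else b - a)"
    "(b + a) mod q = (if b + a < q then b + a else b + a - q)"
    "a mod q = a" "b mod q = b"
  using assms by (auto simp: modr)

lemma av_eq_bad:
  fixes a b q :: int
  assumes r: "0 \<le> a" "a < q" "0 \<le> b" "b < q" and a: "\<not> bad q a" and b: "\<not> bad q b"
  shows "av q (b - a) \<noteq> av q (b + a)"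
  using a b r unfolding av_def bad_def red[OF r]
  by (simp add: min_def split: if_splits)

definition blk :: "int \<Rightarrow> int \<Rightarrow> int \<Rightarrow> bool" where
  "blk q a b \<longleftrightarrow> (q mod 4 = 1 \<longrightarrow> (av q a + 1) div 2 \<noteq> (av q b + 1) div 2)"
definition inD0 :: "int \<Rightarrow> int \<Rightarrow> int \<Rightarrow> bool" where
  "inD0 q a b \<longleftrightarrow> \<not> bad q a \<and> \<not> bad q b \<and> \<not> bad q (b - a) \<and> \<not> bad q (b + a) \<and> blk q a b
     \<and> ((ps q (b - a) = ps q (b + a)) = (av q (b - a) < av q (b + a)))"
definition inD4 :: "int \<Rightarrow> int \<Rightarrow> int \<Rightarrow> bool" where
  "inD4 q a b \<longleftrightarrow> q mod 4 = 0 \<and> \<not> bad q a \<and> \<not> bad q b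
     \<and> ((2 * ((b - a) mod q) = q \<and> 4 * av q a < q) \<or> (2 * ((b + a) mod q) = q \<and> 4 * av q a > q))"
definition inE :: "int \<Rightarrow> int \<Rightarrow> int \<Rightarrow> bool" where
  "inE q a b \<longleftrightarrow> \<not> bad q a \<and> \<not> bad q b \<and> av q b \<noteq> av q a
     \<and> (q mod 4 = 1 \<longrightarrow> (av q a + 1) div 2 \<noteq> (av q b + 1) div 2)
     \<and> (q mod 4 = 2 \<longrightarrow> 2 * av q b + 2 * av q a \<noteq> q)"

lemma C1:
  fixes a b q :: int
  assumes r: "0 \<le> a" "a < q" "0 \<le> b" "b < q" and a: "\<not> bad q a" and b: "\<not> bad q b"
  shows "(bad q (b - a) \<or> bad q (b + a)) \<longleftrightarrow> (av q b = av q a \<or> 2 * av q b + 2 * av q a = q)"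
  using a b r unfolding av_def bad_def red[OF r]
  by (auto simp: min_def split: if_splits)

lemma C2:
  fixes a b q :: int
  assumes r: "0 \<le> a" "a < q" "0 \<le> b" "b < q" and a: "\<not> bad q a" and b: "\<not> bad q b"
    and k: "2 * ((b - a) mod q) = q \<or> 2 * ((b + a) mod q) = q"
  shows "2 * av q b + 2 * av q a = q"
  using a b r k unfolding av_def bad_def red[OF r]
  by (auto simp: min_def split: if_splits)

lemma C3:
  fixes a b q :: int
  assumes r: "0 \<le> a" "a < q" "0 \<le> b" "b < q" and a: "\<not> bad q a" and b: "\<not> bad q b"
    and k: "2 * ((b - a) mod q) = q"
  shows "2 * ((b + a) mod q) \<noteq> q"
  using a b r k unfolding av_def bad_def red[OF r]
  by (auto simp: min_def split: if_splits)

lemma C4: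
  fixes a b q :: int
  assumes r: "0 \<le> a" "a < q" "0 \<le> b" "b < q" and a: "\<not> bad q a" and b: "\<not> bad q b"
    and ne: "av q b \<noteq> av q a" and bd: "bad q (b - a) \<or> bad q (b + a)"
  shows "2 * ((b - a) mod q) = q \<or> 2 * ((b + a) mod q) = q"
  using a b r ne bd unfolding av_def bad_def red[OF r]
  by (auto simp: min_def split: if_splits)

lemma negk: "0 < q \<Longrightarrow> 2 * ((x::int) mod q) = q \<Longrightarrow> 2 * ((- x) mod q) = q"
  unfolding negmod by auto

lemma negk_iff: "0 < q \<Longrightarrow> 2 * ((- (x::int)) mod q) = q \<longleftrightarrow> 2 * (x mod q) = q"
  using negk[of q x] negk[of q "-x"] by auto

lemma bad_k: "2 * ((x::int) mod q) = q \<Longrightarrow> bad q x" by (simp add: bad_def)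

lemma part:
  fixes a b q :: int
  assumes q: "q \<ge> 3" and r: "0 \<le> a" "a < q" "0 \<le> b" "b < q" and e: "inE q a b"
  shows "(inD0 q a b \<or> inD4 q a b) \<longleftrightarrow> \<not> (inD0 q b a \<or> inD4 q b a)"
proof -
  have q0: "0 < q" using q by simp
  from e have na: "\<not> bad q a" and nb: "\<not> bad q b" and ne: "av q b \<noteq> av q a"
    by (auto simp: inE_def)
  have m1: "a - b = - (b - a)" by simp
  have bx: "bad q (a - b) = bad q (b - a)" using bad_neg[OF q0, of "b - a"] by simp
  have ax: "av q (a - b) = av q (b - a)" using av_neg[OF q0, of "b - a"] by simp
  have px: "\<not> bad q (b - a) \<Longrightarrow> ps q (a - b) = (\<not> ps q (b - a))" using ps_neg[OF q0, of "b - a"] by simp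
  have ab: "a + b = b + a" by simp
  show ?thesis
  proof (cases "\<not> bad q (b - a) \<and> \<not> bad q (b + a)")
    case True
    have n4: "\<not> inD4 q a b" "\<not> inD4 q b a"
      using True bx bad_k[of "b - a" q] bad_k[of "b + a" q] bad_k[of "a - b" q] bad_k[of "a + b" q]
      by (auto simp: inD4_def ab)
    have bl: "blk q a b" "blk q b a" using e by (auto simp: inE_def blk_def)
    have avn: "av q (b - a) \<noteq> av q (b + a)" using av_eq_bad[OF r na nb] .
    show ?thesis using n4 bl avn True bx ax px na nb
      by (auto simp: inD0_def ab)
  next
    case False
    have n0: "\<not> inD0 q a b" "\<not> inD0 q b a" using False bx by (auto simp: inD0_def ab)
    have k: "2 * ((b - a) mod q) = q \<or> 2 * ((b + a) mod q) = q"
      using C4[OF r na nb ne] False by blast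
    have s: "2 * av q b + 2 * av q a = q" using C2[OF r na nb k] .
    have q4: "q mod 4 = 0"
    proof -
      have "q mod 4 \<noteq> 2" using e s by (auto simp: inE_def)
      moreover have "q mod 2 = 0" using s by presburger
      ultimately show ?thesis by presburger
    qed
    show ?thesis
    proof (cases "2 * ((b - a) mod q) = q")
      case True
      have y: "2 * ((b + a) mod q) \<noteq> q" using C3[OF r na nb True] .
      have x': "2 * ((a - b) mod q) = q" using negk[OF q0 True] by simp
      have "inD4 q a b \<longleftrightarrow> 4 * av q a < q" using True y q4 na nb by (auto simp: inD4_def)
      moreover have "inD4 q b a \<longleftrightarrow> 4 * av q b < q" using x' y q4 na nb by (auto simp: inD4_def ab)
      ultimately show ?thesis using n0 s ne by auto
    next
      case False
      then have y: "2 * ((b + a) mod q) = q" using k by blast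
      have x': "2 * ((a - b) mod q) \<noteq> q" using False negk_iff[OF q0, of "b - a"] by simp
      have "inD4 q a b \<longleftrightarrow> 4 * av q a > q" using False y q4 na nb by (auto simp: inD4_def)
      moreover have "inD4 q b a \<longleftrightarrow> 4 * av q b > q" using x' y q4 na nb by (auto simp: inD4_def ab)
      ultimately show ?thesis using n0 s ne by auto
    qed
  qed
qed

lemma DsubE:
  fixes a b q :: int
  assumes q: "q \<ge> 3" and r: "0 \<le> a" "a < q" "0 \<le> b" "b < q" and d: "inD0 q a b \<or> inD4 q a b"
  shows "inE q a b"
  using d
proof
  assume d0: "inD0 q a b"
  then have na: "\<not> bad q a" and nb: "\<not> bad q b" and nx: "\<not> bad q (b - a)" "\<not> bad q (b + a)"
    and bl: "blk q a b" by (auto simp: inD0_def)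
  have "\<not> (av q b = av q a \<or> 2 * av q b + 2 * av q a = q)" using C1[OF r na nb] nx by blast
  then show ?thesis using na nb bl by (auto simp: inE_def blk_def)
next
  assume d4: "inD4 q a b"
  then have na: "\<not> bad q a" and nb: "\<not> bad q b" and q4: "q mod 4 = 0"
    and k: "2 * ((b - a) mod q) = q \<or> 2 * ((b + a) mod q) = q"
    and ne: "4 * av q a \<noteq> q" by (auto simp: inD4_def)
  have s: "2 * av q b + 2 * av q a = q" using C2[OF r na nb k] .
  then show ?thesis using na nb q4 ne by (auto simp: inE_def)
qed

lemma rho:
  fixes a b q :: int
  assumes q: "q \<ge> 3" and r: "0 \<le> a" "a < q" "0 \<le> b" "b < q" and d: "inD0 q a b \<or> inD4 q a b"
  shows "inD0 q ((- b) mod q) a \<or> inD4 q ((- b) mod q) a"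
proof -
  have q0: "0 < q" using q by simp
  define a' where "a' = (- b) mod q"
  have ra': "0 \<le> a'" "a' < q" using q0 by (auto simp: a'_def)
  have ba': "bad q a' = bad q b" using bad_neg[OF q0, of b] bad_cong[of a' q "-b"] by (simp add: a'_def)
  have aa': "av q a' = av q b" using av_neg[OF q0, of b] av_cong[of a' q "-b"] by (simp add: a'_def)
  have e1: "(a - a') mod q = (b + a) mod q" by (simp add: a'_def mod_diff_right_eq add.commute)
  have e2: "(a + a') mod q = (- (b - a)) mod q" by (simp add: a'_def mod_add_right_eq)
  have bd1: "bad q (a - a') = bad q (b + a)" using bad_cong[OF e1] .
  have pd1: "ps q (a - a') = ps q (b + a)" using ps_cong[OF e1] .
  have ad1: "av q (a - a') = av q (b + a)" using av_cong[OF e1] .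
  have bd2: "bad q (a + a') = bad q (b - a)" using bad_cong[OF e2] bad_neg[OF q0, of "b - a"] by simp
  have ad2: "av q (a + a') = av q (b - a)" using av_cong[OF e2] av_neg[OF q0, of "b - a"] by simp
  have pd2: "\<not> bad q (b - a) \<Longrightarrow> ps q (a + a') = (\<not> ps q (b - a))" using ps_cong[OF e2] ps_neg[OF q0, of "b - a"] by simp
  have bl: "blk q a' a = blk q a b" by (auto simp: blk_def aa')
  show ?thesis
    using d
  proof
    assume d0: "inD0 q a b"
    then have na: "\<not> bad q a" and nb: "\<not> bad q b" by (auto simp: inD0_def)
    have avn: "av q (b - a) \<noteq> av q (b + a)" using av_eq_bad[OF r na nb] .
    have "inD0 q a' a" using d0 avn ba' bd1 pd1 ad1 bd2 ad2 pd2 bl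
      unfolding inD0_def by auto
    then show ?thesis by (simp add: a'_def)
  next
    assume d4: "inD4 q a b"
    then have na: "\<not> bad q a" and nb: "\<not> bad q b" and q4: "q mod 4 = 0"
      and k: "2 * ((b - a) mod q) = q \<or> 2 * ((b + a) mod q) = q" by (auto simp: inD4_def)
    have s: "2 * av q b + 2 * av q a = q" using C2[OF r na nb k] .
    have "inD4 q a' a"
    proof (cases "2 * ((b - a) mod q) = q \<and> 4 * av q a < q")
      case True
      have "2 * ((a + a') mod q) = q" using e2 negk[OF q0, of "b - a"] True by simp
      then show ?thesis using True s aa' ba' na nb q4 unfolding inD4_def by auto
    next
      case False
      then have "2 * ((b + a) mod q) = q \<and> 4 * av q a > q" using d4 by (auto simp: inD4_def)
      moreover have "2 * ((a - a') mod q) = q" using e1 calculation by simp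
      ultimately show ?thesis using s aa' ba' na nb q4 unfolding inD4_def by auto
    qed
    then show ?thesis by (simp add: a'_def)
  qed
qed

lemma rprime:
  fixes a b q :: int
  assumes q: "q \<ge> 3" and r: "0 \<le> a" "a < q" "0 \<le> b" "b < q" and d: "inD0 q a b \<or> inD4 q a b"
  shows "\<not> (inD0 q ((- b) mod q) ((- a) mod q) \<or> inD4 q ((- b) mod q) ((- a) mod q))"
proof -
  have q0: "0 < q" using q by simp
  define a' where "a' = (- b) mod q"
  define b' where "b' = (- a) mod q"
  have aa': "av q a' = av q b" using av_neg[OF q0, of b] av_cong[of a' q "-b"] by (simp add: a'_def)
  have e1: "(b' - a') mod q = (b - a) mod q"
  proof -
    have "(b' - a') mod q = (- a - - b) mod q" by (simp add: a'_def b'_def mod_diff_eq)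
    then show ?thesis by simp
  qed
  have e2: "(b' + a') mod q = (- (b + a)) mod q"
  proof -
    have "(b' + a') mod q = (- a + - b) mod q" by (simp add: a'_def b'_def mod_add_eq)
    then show ?thesis by (simp add: add.commute)
  qed
  have bd1: "bad q (b' - a') = bad q (b - a)" using bad_cong[OF e1] .
  have pd1: "ps q (b' - a') = ps q (b - a)" using ps_cong[OF e1] .
  have ad1: "av q (b' - a') = av q (b - a)" using av_cong[OF e1] .
  have bd2: "bad q (b' + a') = bad q (b + a)" using bad_cong[OF e2] bad_neg[OF q0, of "b + a"] by simp
  have ad2: "av q (b' + a') = av q (b + a)" using av_cong[OF e2] av_neg[OF q0, of "b + a"] by simp
  have pd2: "\<not> bad q (b + a) \<Longrightarrow> ps q (b' + a') = (\<not> ps q (b + a))" using ps_cong[OF e2] ps_neg[OF q0, of "b + a"] by simp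
  have k1: "2 * ((b' - a') mod q) = q \<longleftrightarrow> 2 * ((b - a) mod q) = q" using e1 by simp
  have k2: "2 * ((b' + a') mod q) = q \<longleftrightarrow> 2 * ((b + a) mod q) = q" using e2 negk_iff[OF q0, of "b + a"] by simp
  show ?thesis
    using d
  proof
    assume d0: "inD0 q a b"
    then have nx: "\<not> bad q (b - a)" "\<not> bad q (b + a)" by (auto simp: inD0_def)
    have "\<not> inD0 q a' b'" using d0 bd1 pd1 ad1 bd2 ad2 pd2 unfolding inD0_def by auto
    moreover have "\<not> inD4 q a' b'" using k1 k2 nx bad_k[of "b - a" q] bad_k[of "b + a" q]
      unfolding inD4_def by auto
    ultimately show ?thesis by (simp add: a'_def b'_def)
  next
    assume d4: "inD4 q a b"
    then have na: "\<not> bad q a" and nb: "\<not> bad q b"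
      and k: "2 * ((b - a) mod q) = q \<or> 2 * ((b + a) mod q) = q" by (auto simp: inD4_def)
    have s: "2 * av q b + 2 * av q a = q" using C2[OF r na nb k] .
    have "bad q (b - a) \<or> bad q (b + a)" using k bad_k by blast
    then have "\<not> inD0 q a' b'" using bd1 bd2 unfolding inD0_def by auto
    moreover have "\<not> inD4 q a' b'"
    proof
      assume d4': "inD4 q a' b'"
      show False
      proof (cases "2 * ((b - a) mod q) = q")
        case True
        have y: "2 * ((b + a) mod q) \<noteq> q" using C3[OF r na nb True] .
        have "4 * av q a < q" using d4 True y unfolding inD4_def by auto
        then show False using d4' k1 k2 y aa' s unfolding inD4_def by auto
      next
        case False
        then have y: "2 * ((b + a) mod q) = q" using k by blast
        have "4 * av q a > q" using d4 False y unfolding inD4_def by auto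
        then show False using d4' k1 k2 False aa' s unfolding inD4_def by auto
      qed
    qed
    ultimately show ?thesis by (simp add: a'_def b'_def)
  qed
qed

definition Dp :: "int \<Rightarrow> (int \<times> int) set" where
  "Dp q = {(a,b). 0 \<le> a \<and> a < q \<and> 0 \<le> b \<and> b < q \<and> (inD0 q a b \<or> inD4 q a b)}"
definition Ep :: "int \<Rightarrow> (int \<times> int) set" where
  "Ep q = {(a,b). 0 \<le> a \<and> a < q \<and> 0 \<le> b \<and> b < q \<and> inE q a b}"

lemma inE_sym: "inE q a b = inE q b a"
  by (auto simp: inE_def)

lemma fin_Dp: "finite (Dp q)"
  by (rule finite_subset[of _ "{0..<q} \<times> {0..<q}"]) (auto simp: Dp_def)
lemma fin_Ep: "finite (Ep q)"
  by (rule finite_subset[of _ "{0..<q} \<times> {0..<q}"]) (auto simp: Ep_def)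

lemma card_Ep_Dp:
  assumes q: "q \<ge> 3"
  shows "card (Ep q) = 2 * card (Dp q)"
proof -
  define sw where "sw = (\<lambda>(x::int,y::int). (y,x))"
  have sub1: "Dp q \<subseteq> Ep q" using DsubE[OF q] by (auto simp: Dp_def Ep_def)
  have sub2: "sw ` Dp q \<subseteq> Ep q" using DsubE[OF q] inE_sym by (auto simp: Dp_def Ep_def sw_def)
  have sub3: "Ep q \<subseteq> Dp q \<union> sw ` Dp q"
  proof
    fix e assume e: "e \<in> Ep q"
    obtain a b where ab: "e = (a,b)" by (cases e)
    show "e \<in> Dp q \<union> sw ` Dp q"
    proof (cases "e \<in> Dp q")
      case True then show ?thesis by simp
    next
      case False
      then have "inD0 q b a \<or> inD4 q b a" using part[OF q, of a b] e ab by (auto simp: Ep_def Dp_def)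
      then have "(b,a) \<in> Dp q" using e ab by (auto simp: Ep_def Dp_def)
      then show ?thesis using ab by (auto simp: sw_def image_iff)
    qed
  qed
  have disj: "Dp q \<inter> sw ` Dp q = {}"
  proof (rule ccontr)
    assume "Dp q \<inter> sw ` Dp q \<noteq> {}"
    then obtain a b where "(a,b) \<in> Dp q" "(b,a) \<in> Dp q" by (auto simp: sw_def)
    then show False using part[OF q, of a b] DsubE[OF q, of a b] by (auto simp: Dp_def)
  qed
  have eq: "Ep q = Dp q \<union> sw ` Dp q" using sub1 sub2 sub3 by blast
  have inj: "inj_on sw (Dp q)" by (auto simp: inj_on_def sw_def)
  have "card (Ep q) = card (Dp q) + card (sw ` Dp q)"
    unfolding eq by (rule card_Un_disjoint) (auto simp: fin_Dp disj)
  also have "card (sw ` Dp q) = card (Dp q)" using card_image[OF inj] .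
  finally show ?thesis by simp
qed

lemma mag:
  fixes q :: int and \<phi> :: "int \<Rightarrow> bool"
  assumes q: "q \<ge> 3"
  shows "card {b \<in> {0..<q}. \<not> bad q b \<and> \<phi> (av q b)} = 2 * card {v \<in> {1..(q - 1) div 2}. \<phi> v}"
proof -
  define h where "h = (q - 1) div 2"
  have h: "2 * h \<le> q - 1" "q - 2 \<le> 2 * h" unfolding h_def by presburger+
  define S where "S = {v \<in> {1..h}. \<phi> v}"
  define f where "f = (\<lambda>v::int. q - v)"
  have eq: "{b \<in> {0..<q}. \<not> bad q b \<and> \<phi> (av q b)} = S \<union> f ` S"
  proof (intro set_eqI iffI)
    fix b assume "b \<in> {b \<in> {0..<q}. \<not> bad q b \<and> \<phi> (av q b)}"
    then have b: "0 \<le> b" "b < q" "b \<noteq> 0" "2 * b \<noteq> q" "\<phi> (av q b)" by (auto simp: bad_def)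
    show "b \<in> S \<union> f ` S"
    proof (cases "2 * b < q")
      case True
      then have "av q b = b" using b by (simp add: av_def)
      then show ?thesis using b True h by (auto simp: S_def)
    next
      case False
      then have "av q b = q - b" using b by (simp add: av_def)
      then have "q - b \<in> S" using b False h by (auto simp: S_def)
      moreover have "b = f (q - b)" by (simp add: f_def)
      ultimately show ?thesis by blast
    qed
  next
    fix b assume "b \<in> S \<union> f ` S"
    then show "b \<in> {b \<in> {0..<q}. \<not> bad q b \<and> \<phi> (av q b)}"
    proof
      assume "b \<in> S"
      then have b: "1 \<le> b" "b \<le> h" "\<phi> b" by (auto simp: S_def)
      then have "av q b = b" using h by (simp add: av_def)
      then show ?thesis using b h by (auto simp: bad_def)
    next
      assume "b \<in> f ` S"
      then obtain v where v: "1 \<le> v" "v \<le> h" "\<phi> v" "b = q - v" by (auto simp: S_def f_def)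
      then have "b mod q = q - v" using h mod_pos_pos_trivial[of "q - v" q] by simp
      then have "av q b = v" using v h by (simp add: av_def)
      then show ?thesis using v h \<open>b mod q = q - v\<close> by (auto simp: bad_def)
    qed
  qed
  have disj: "S \<inter> f ` S = {}" using h by (auto simp: S_def f_def)
  have inj: "inj_on f S" by (auto simp: inj_on_def f_def)
  have finS: "finite S" unfolding S_def by (rule finite_subset[of _ "{1..h}"]) auto
  have "card (S \<union> f ` S) = card S + card (f ` S)"
    by (rule card_Un_disjoint) (auto simp: finS disj)
  also have "card (f ` S) = card S" using card_image[OF inj] .
  finally show ?thesis using eq by (simp add: S_def h_def)
qed

lemma fibcount:
  fixes q u :: int
  assumes q: "q \<ge> 11" and u: "1 \<le> u" "2*u < q"
  shows "int (card {v \<in> {1..(q-1) div 2}. v \<noteq> u \<and> (q mod 4 = 1 \<longrightarrow> (u+1) div 2 \<noteq> (v+1) div 2)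
            \<and> (q mod 4 = 2 \<longrightarrow> 2*v + 2*u \<noteq> q)})
         = (q-1) div 2 - (if q mod 4 = 1 \<or> q mod 4 = 2 then 2 else 1)"
proof -
  define h where "h = (q-1) div 2"
  define S where "S = {v \<in> {1..h}. v \<noteq> u \<and> (q mod 4 = 1 \<longrightarrow> (u+1) div 2 \<noteq> (v+1) div 2)
            \<and> (q mod 4 = 2 \<longrightarrow> 2*v + 2*u \<noteq> q)}"
  have uh: "u \<le> h" using u unfolding h_def by presburger
  have h5: "h \<ge> 5" using q unfolding h_def by presburger
  have ch: "card {1..h} = nat h" by simp
  have "q mod 4 = 0 \<or> q mod 4 = 1 \<or> q mod 4 = 2 \<or> q mod 4 = 3" by presburger
  then consider (a) "q mod 4 = 0 \<or> q mod 4 = 3" | (b) "q mod 4 = 1" | (c) "q mod 4 = 2" by blast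
  then have "int (card S) = h - (if q mod 4 = 1 \<or> q mod 4 = 2 then 2 else 1)"
  proof cases
    case a
    have "S = {1..h} - {u}" using a by (auto simp: S_def)
    moreover have "card ({1..h} - {u}) = nat h - 1" using u uh by (simp add: card_Diff_singleton)
    ultimately show ?thesis using a h5 by auto
  next
    case b
    define w where "w = (u + 1) div 2"
    have hev: "h mod 2 = 0" using b unfolding h_def by presburger
    have w1: "1 \<le> 2*w - 1" "2*w \<le> h" using u uh hev unfolding w_def by presburger+
    have "S = {1..h} - {2*w-1, 2*w}"
    proof (intro set_eqI iffI)
      fix v assume "v \<in> S"
      then show "v \<in> {1..h} - {2*w-1, 2*w}" using b unfolding S_def w_def by (auto; presburger)
    next
      fix v assume "v \<in> {1..h} - {2*w-1, 2*w}"
      then show "v \<in> S" using b unfolding S_def w_def by (auto; presburger)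
    qed
    moreover have "card ({1..h} - {2*w-1, 2*w}) = nat h - 2"
      using w1 by (subst card_Diff_subset) auto
    ultimately show ?thesis using b h5 by auto
  next
    case c
    define k where "k = q div 2"
    have qk: "q = 2*k" "k mod 2 = 1" "h = k - 1" using c unfolding k_def h_def by presburger+
    have "S = {1..h} - {u, k - u}" using c qk by (auto simp: S_def)
    moreover have "card ({1..h} - {u, k - u}) = nat h - 2"
    proof -
      have ne: "k - u \<noteq> u" using qk by presburger
      have "card ({1..h} - {u, k - u}) = card {1..h} - card {u, k - u}"
        using u uh qk by (intro card_Diff_subset) auto
      then show ?thesis using ne by simp
    qed
    ultimately show ?thesis using c h5 by auto
  qed
  then show ?thesis by (simp add: S_def h_def)
qed

lemma card_Ep:
  fixes q :: int
  assumes q: "q \<ge> 11"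
  shows "int (card (Ep q)) = 4 * ((q-1) div 2) * ((q-1) div 2 - (if q mod 4 = 1 \<or> q mod 4 = 2 then 2 else 1))"
proof -
  define h where "h = (q-1) div 2"
  define c :: int where "c = (if q mod 4 = 1 \<or> q mod 4 = 2 then 2 else 1)"
  have q3: "q \<ge> 3" using q by simp
  define A where "A = {a \<in> {0..<q}. \<not> bad q a}"
  define F where "F a = {b \<in> {0..<q}. inE q a b}" for a
  have EpS: "Ep q = Sigma A F" by (auto simp: Ep_def A_def F_def inE_def)
  have finA: "finite A" unfolding A_def by (rule finite_subset[of _ "{0..<q}"]) auto
  have finF: "finite (F a)" for a unfolding F_def by (rule finite_subset[of _ "{0..<q}"]) auto
  have cA: "card A = 2 * nat h"
  proof -
    have "A = {b \<in> {0..<q}. \<not> bad q b \<and> (\<lambda>_. True) (av q b)}" by (simp add: A_def)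
    then have "card A = 2 * card {v \<in> {1..h}. (\<lambda>_. True) v}" using mag[OF q3, of "\<lambda>_. True"] h_def by simp
    moreover have "{v \<in> {1..h}. (\<lambda>_. True) v} = {1..h}" by auto
    ultimately show ?thesis by simp
  qed
  have cF: "card (F a) = 2 * nat (h - c)" if a: "a \<in> A" for a
  proof -
    have na: "\<not> bad q a" using a by (simp add: A_def)
    define u where "u = av q a"
    have u: "1 \<le> u" "2 * u < q" using av_rng[of q a] na q by (auto simp: u_def)
    have "F a = {b \<in> {0..<q}. \<not> bad q b \<and> (\<lambda>v. v \<noteq> u \<and> (q mod 4 = 1 \<longrightarrow> (u+1) div 2 \<noteq> (v+1) div 2)
            \<and> (q mod 4 = 2 \<longrightarrow> 2*v + 2*u \<noteq> q)) (av q b)}"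
      using na by (auto simp: F_def inE_def u_def)
    then have "card (F a) = 2 * card {v \<in> {1..h}. v \<noteq> u \<and> (q mod 4 = 1 \<longrightarrow> (u+1) div 2 \<noteq> (v+1) div 2)
            \<and> (q mod 4 = 2 \<longrightarrow> 2*v + 2*u \<noteq> q)}" using mag[OF q3] h_def by simp
    moreover have "int (card {v \<in> {1..h}. v \<noteq> u \<and> (q mod 4 = 1 \<longrightarrow> (u+1) div 2 \<noteq> (v+1) div 2)
            \<and> (q mod 4 = 2 \<longrightarrow> 2*v + 2*u \<noteq> q)}) = h - c" (is "int ?X = _")
      using fibcount[OF q u] by (simp add: h_def c_def)
    then have "nat (int ?X) = nat (h - c)" by (rule arg_cong)
    then have "?X = nat (h - c)" by (simp only: nat_int)
    ultimately show ?thesis by simp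
  qed
  have "card (Ep q) = (\<Sum>a\<in>A. card (F a))" unfolding EpS by (rule card_SigmaI[OF finA]) (simp add: finF)
  also have "\<dots> = (\<Sum>a\<in>A. 2 * nat (h - c))" using cF by simp
  also have "\<dots> = card A * (2 * nat (h - c))" by simp
  finally have "card (Ep q) = 2 * nat h * (2 * nat (h - c))" using cA by simp
  moreover have "h \<ge> 5" "c \<le> 2" using q unfolding h_def c_def by presburger+
  ultimately show ?thesis by (simp add: h_def[symmetric] c_def[symmetric])
qed

definition Tq :: "int \<Rightarrow> (int \<times> int) set" where
  "Tq q = {(1, (q-1) div 4), ((q-1) div 4, q - 2 - (q-1) div 4), (q - 2 - (q-1) div 4, 1)}"

lemma modid: "0 \<le> (x::int) \<Longrightarrow> x < q \<Longrightarrow> x mod q = x" by simp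

lemma T_sub:
  fixes q :: int
  assumes q: "q \<ge> 11"
  shows "Tq q \<subseteq> Dp q"
proof -
  define b where "b = (q-1) div 4"
  define c where "c = q - 2 - b"
  have bb: "4*b \<le> q - 1" "q - 1 < 4*b + 4" "b \<ge> 2" "2*b + 6 < q" using q unfolding b_def by presburger+
  have m1: "1 mod q = 1" "b mod q = b" "c mod q = c" "(b - 1) mod q = b - 1" "(b + 1) mod q = b + 1"
    using bb by (simp_all add: c_def)
  have x1: "c - b = q - 2 - 2*b" and x2: "c + b = q - 2" by (simp_all add: c_def)
  have m2: "(c - b) mod q = q - 2 - 2*b" "(c + b) mod q = q - 2"
    unfolding x1 x2 using bb by (intro modid; simp)+
  have m3: "(1 - c) mod q = b + 3" "(1 + c) mod q = q - 1 - b"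
  proof -
    have x4: "1 - c = (b + 3) - q" by (simp add: c_def)
    have "((b + 3) - q) mod q = (b + 3) mod q" by (metis diff_add_cancel mod_add_self2)
    also have "\<dots> = b + 3" using bb by (intro modid; simp)
    finally show "(1 - c) mod q = b + 3" unfolding x4 .
    have x3: "1 + c = q - 1 - b" by (simp add: c_def)
    show "(1 + c) mod q = q - 1 - b" unfolding x3 using bb by (intro modid; simp)
  qed
  have e1: "inD0 q 1 b"
    unfolding inD0_def bad_def ps_def av_def blk_def using m1(1,2,4,5) bb q apply (simp add: min_def)
    apply (rule impI)
    apply presburger
    done
  have r0: "q mod 4 = 0 \<Longrightarrow> q = 4*b + 4" and r123: "q mod 4 \<noteq> 0 \<Longrightarrow> q \<le> 4*b + 3"
    using bb unfolding b_def by presburger+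
  have dv1: "(b + 3) div 2 = (b + 1) div 2 + 1" by presburger
  have dv3: "(b + 3) div 2 \<noteq> 1" using bb by presburger
  have ac: "av q c = b + 2" using m1 bb by (simp add: av_def min_def c_def)
  have ab: "av q b = b" using m1 bb by (simp add: av_def min_def)
  have a1: "av q 1 = 1" using m1 bb by (simp add: av_def min_def)
  have nbb: "\<not> bad q b" "\<not> bad q c" "\<not> bad q 1" using m1 bb by (auto simp: bad_def c_def)
  have e2: "inD0 q b c \<or> inD4 q b c"
  proof (cases "q mod 4 = 0")
    case True
    have "2 * ((c - b) mod q) = q" using True r0 m2 by simp
    then have "inD4 q b c" unfolding inD4_def using nbb ab bb True r0 by simp
    then show ?thesis by simp
  next
    case False
    have f: "\<not> bad q (c - b)" "\<not> bad q (c + b)" "ps q (c - b)" "\<not> ps q (c + b)"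
      "av q (c - b) = q - 2 - 2*b" "av q (c + b) = 2"
      using m2 bb r123[OF False] by (auto simp: bad_def ps_def av_def min_def)
    have "blk q b c" unfolding blk_def ab ac using dv1 by (simp add: add.commute)
    then have "inD0 q b c" unfolding inD0_def using nbb f bb by simp
    then show ?thesis by simp
  qed
  have e3: "inD0 q c 1"
  proof -
    have f: "\<not> bad q (1 - c)" "\<not> bad q (1 + c)" "ps q (1 - c)" "\<not> ps q (1 + c)"
      "av q (1 - c) = b + 3" "av q (1 + c) = b + 1"
      using m3 bb by (auto simp: bad_def ps_def av_def min_def)
    have "blk q c 1" unfolding blk_def ac a1 using dv3 by (simp add: add.commute)
    then show ?thesis unfolding inD0_def using nbb f bb by simp
  qed
  show ?thesis using e1 e2 e3 bb unfolding Tq_def Dp_def b_def[symmetric] c_def[symmetric]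
    by (auto simp: c_def)
qed

lemma Dp_mem: "(a,b) \<in> Dp q \<Longrightarrow> 0 \<le> a \<and> a < q \<and> 0 \<le> b \<and> b < q \<and> \<not> bad q a \<and> \<not> bad q b"
  by (auto simp: Dp_def inD0_def inD4_def)

lemma rhoD: "q \<ge> 3 \<Longrightarrow> (a,b) \<in> Dp q \<Longrightarrow> ((- b) mod q, a) \<in> Dp q"
  using rho[of q a b] by (auto simp: Dp_def)

lemma rho3: assumes q: "q \<ge> 3" and d: "(a,b) \<in> Dp q" shows "(b, (- a) mod q) \<in> Dp q"
proof -
  have r: "0 \<le> b" "b < q" using Dp_mem[OF d] by auto
  have "((- ((- b) mod q)) mod q, (- a) mod q) \<in> Dp q"
    using rhoD[OF q, OF rhoD[OF q, OF rhoD[OF q d]]] .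
  moreover have "(- ((- b) mod q)) mod q = b" using r by (simp add: mod_minus_eq)
  ultimately show ?thesis by simp
qed

lemma negD: assumes q: "q \<ge> 3" and d: "(a,b) \<in> Dp q" shows "((- a) mod q, (- b) mod q) \<in> Dp q"
  using rhoD[OF q, OF rhoD[OF q d]] .

lemma neg_inj: "0 \<le> (b::int) \<Longrightarrow> b < q \<Longrightarrow> 0 \<le> b' \<Longrightarrow> b' < q \<Longrightarrow> (- b) mod q = (- b') mod q \<Longrightarrow> b = b'"
  by (metis add.inverse_inverse mod_minus_eq mod_pos_pos_trivial)

lemma bal_Dp:
  assumes q: "q \<ge> 3"
  shows "card {e \<in> Dp q. snd e = v} = card {e \<in> Dp q. fst e = v}"
proof -
  define f where "f = (\<lambda>(a::int,b::int). ((- b) mod q, a))"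
  define g where "g = (\<lambda>(a::int,b::int). (b, (- a) mod q))"
  have fin: "finite {e \<in> Dp q. P e}" for P using fin_Dp[of q] by simp
  show ?thesis
  proof (rule card_bij_eq[of g _ _ f])
    show "inj_on g {e \<in> Dp q. snd e = v}"
      by (auto simp: inj_on_def g_def dest!: Dp_mem intro: neg_inj)
    show "g ` {e \<in> Dp q. snd e = v} \<subseteq> {e \<in> Dp q. fst e = v}"
      using rho3[OF q] by (auto simp: g_def)
    show "inj_on f {e \<in> Dp q. fst e = v}"
      by (auto simp: inj_on_def f_def dest!: Dp_mem intro: neg_inj)
    show "f ` {e \<in> Dp q. fst e = v} \<subseteq> {e \<in> Dp q. snd e = v}"
      using rhoD[OF q] by (auto simp: f_def)
  qed (rule fin)+
qed

lemma sum_Dp: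
  assumes q: "q \<ge> 3"
  shows "2 * (\<Sum>e\<in>Dp q. fst e) = q * int (card (Dp q))"
proof -
  define n where "n = (\<lambda>(a::int,b::int). ((- a) mod q, (- b) mod q))"
  have nn: "n (n e) = e \<and> n e \<in> Dp q \<and> fst (n e) = q - fst e" if e: "e \<in> Dp q" for e
  proof -
    obtain a b where ab: "e = (a,b)" by (cases e)
    have r: "0 \<le> a" "a < q" "0 \<le> b" "b < q" "\<not> bad q a" using Dp_mem e ab by auto
    have "a \<noteq> 0" using r by (auto simp: bad_def)
    then have f: "fst (n e) = q - fst e" using r ab by (simp add: n_def negmod)
    have m: "n e \<in> Dp q" using negD[OF q, of a b] e ab by (simp add: n_def)
    have "n (n e) = e" using r ab by (simp add: n_def mod_minus_eq)
    then show ?thesis using f m by simp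
  qed
  have "(\<Sum>e\<in>Dp q. q - fst e) = (\<Sum>e\<in>Dp q. fst e)"
    by (rule sum.reindex_bij_witness[of _ n n]) (use nn in auto)
  moreover have "(\<Sum>e\<in>Dp q. q - fst e) = q * int (card (Dp q)) - (\<Sum>e\<in>Dp q. fst e)"
    by (simp add: sum_subtractf)
  ultimately show ?thesis by simp
qed

lemma cas_props:
  fixes G :: "('a,'b) pre_digraph"
  shows "pre_digraph.cas G u p v \<Longrightarrow> (p \<noteq> [] \<longrightarrow> tail G (hd p) = u)
     \<and> (\<forall>i. Suc i < length p \<longrightarrow> head G (p!i) = tail G (p!Suc i))
     \<and> (p \<noteq> [] \<longrightarrow> head G (last p) = v)"
proof (induction p arbitrary: u)
  case Nil then show ?case by simp
next
  case (Cons e es)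
  from Cons.prems have t: "tail G e = u" and c: "pre_digraph.cas G (head G e) es v"
    by (simp_all add: pre_digraph.cas.simps)
  note IH = Cons.IH[OF c]
  show ?case
  proof (intro conjI allI impI)
    show "tail G (hd (e#es)) = u" using t by simp
  next
    fix i assume i: "Suc i < length (e#es)"
    show "head G ((e#es)!i) = tail G ((e#es)!Suc i)"
    proof (cases i)
      case 0
      then have "es \<noteq> []" using i by auto
      then show ?thesis using IH 0 by (simp add: hd_conv_nth)
    next
      case (Suc j)
      then show ?thesis using IH i by simp
    qed
  next
    show "head G (last (e#es)) = v"
    proof (cases "es = []")
      case True
      then show ?thesis using c by (simp add: pre_digraph.cas.simps)
    next
      case False
      then show ?thesis using IH by simp
    qed
  qed
qed

lemma win3: "window s 3 i = [s i, s (Suc i), s (Suc (Suc i))]"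
  by (simp add: window_def numeral_3_eq_3 upt_rec)

lemma euler_SOS:
  fixes q :: int and D :: "(int \<times> int) set"
  assumes q2: "q \<ge> 2"
    and rng: "\<And>a b. (a,b) \<in> D \<Longrightarrow> 0 \<le> a \<and> a < q \<and> 0 \<le> b \<and> b < q"
    and fin: "finite D" and ne: "D \<noteq> {}"
    and bal: "\<And>v. card {e\<in>D. snd e = v} = card {e\<in>D. fst e = v}"
    and hubs: "(h1,h2) \<in> D \<or> (h2,h1) \<in> D"
    and conn: "\<And>v. v \<in> fst ` D \<union> snd ` D \<Longrightarrow> v = h1 \<or> v = h2 \<or> (v,h1) \<in> D \<or> (h1,v) \<in> D \<or> (v,h2) \<in> D \<or> (h2,v) \<in> D"
    and orient: "\<And>a b. (a,b) \<in> D \<Longrightarrow> (b,a) \<notin> D \<and> ((-b) mod q, (-a) mod q) \<notin> D"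
    and cop: "coprime (\<Sum>e\<in>D. fst e) q"
  shows "\<exists>s. is_SOS q 3 s (nat q * card D)"
proof -
  define V where "V = fst ` D \<union> snd ` D"
  define G where "G = \<lparr>verts = V, arcs = D, tail = fst, head = snd\<rparr>"
  have G_simps[simp]: "verts G = V" "arcs G = D" "tail G = fst" "head G = snd"
    by (simp_all add: G_def)
  interpret fin_digraph G
    by unfold_locales (auto simp: V_def fin)
  have adjR: "u \<rightarrow>\<^sup>*\<^bsub>mk_symmetric G\<^esub> v" if "(u,v) \<in> D \<or> (v,u) \<in> D" for u v
  proof -
    have uv: "u \<in> V" "v \<in> V" using that by (force simp: V_def)+
    have "(u,v) \<in> parcs (mk_symmetric G)" using that
      by (auto simp: parcs_mk_symmetric) (metis fst_conv snd_conv)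
    then show ?thesis unfolding reachable_def using uv
      by (auto intro: rtrancl_on_into_rtrancl_on)
  qed
  have reach_trans: "u \<rightarrow>\<^sup>*\<^bsub>mk_symmetric G\<^esub> w" if "u \<rightarrow>\<^sup>*\<^bsub>mk_symmetric G\<^esub> v" "v \<rightarrow>\<^sup>*\<^bsub>mk_symmetric G\<^esub> w" for u v w
    using that unfolding reachable_def by (rule rtrancl_on_trans)
  have h1V: "h1 \<in> V" using hubs by (force simp: V_def)
  have toh: "v \<rightarrow>\<^sup>*\<^bsub>mk_symmetric G\<^esub> h1 \<and> h1 \<rightarrow>\<^sup>*\<^bsub>mk_symmetric G\<^esub> v" if "v \<in> V" for v
  proof -
    have h12: "h1 \<rightarrow>\<^sup>*\<^bsub>mk_symmetric G\<^esub> h2" "h2 \<rightarrow>\<^sup>*\<^bsub>mk_symmetric G\<^esub> h1"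
      using hubs by (auto intro!: adjR)
    have refl: "h1 \<rightarrow>\<^sup>*\<^bsub>mk_symmetric G\<^esub> h1" using h1V unfolding reachable_def by auto
    from conn[of v] that[unfolded V_def] consider "v = h1" | "v = h2" | "(v,h1) \<in> D \<or> (h1,v) \<in> D"
      | "(v,h2) \<in> D \<or> (h2,v) \<in> D" by blast
    then show ?thesis
    proof cases
      case 1 then show ?thesis using refl by simp
    next
      case 2 then show ?thesis using h12 by simp
    next
      case 3 then show ?thesis by (auto intro!: adjR)
    next
      case 4
      then have "v \<rightarrow>\<^sup>*\<^bsub>mk_symmetric G\<^esub> h2" "h2 \<rightarrow>\<^sup>*\<^bsub>mk_symmetric G\<^esub> v" by (auto intro!: adjR)
      then show ?thesis using h12 reach_trans by blast
    qed
  qed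
  have con: "Digraph_Component.connected G"
    unfolding connected_def
  proof (rule strongly_connectedI)
    show "verts (mk_symmetric G) \<noteq> {}" using h1V by auto
    fix u v assume "u \<in> verts (mk_symmetric G)" "v \<in> verts (mk_symmetric G)"
    then have "u \<in> V" "v \<in> V" by auto
    then show "u \<rightarrow>\<^sup>*\<^bsub>mk_symmetric G\<^esub> v" using toh reach_trans by blast
  qed
  have deg: "in_degree G u = out_degree G u" for u
  proof -
    have "in_arcs G u = {e\<in>D. snd e = u}" "out_arcs G u = {e\<in>D. fst e = u}"
      by (auto simp: in_arcs_def out_arcs_def)
    then show ?thesis using bal[of u] by (simp add: in_degree_def out_degree_def)
  qed
  obtain u p where eu: "euler_trail u p u" using closed_euler1[OF con deg] by blast
  then have dist: "distinct p" and setp: "set p = D" and cas: "cas u p u"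
    by (auto simp: euler_trail_def trail_def awalk_def)
  define M where "M = length p"
  have cardD: "card D = M" using distinct_card[OF dist] setp M_def by simp
  have Mpos: "M > 0" using ne setp M_def by auto
  have pne: "p \<noteq> []" using Mpos M_def by auto
  from cas_props[OF cas] have c1: "fst (hd p) = u" and c2: "\<And>i. Suc i < M \<Longrightarrow> snd (p!i) = fst (p!Suc i)"
    and c3: "snd (last p) = u" using pne M_def by auto
  have nxt: "snd (p ! (i mod M)) = fst (p ! (Suc i mod M))" for i
  proof (cases "Suc (i mod M) < M")
    case True
    then have "Suc i mod M = Suc (i mod M)" by (simp add: mod_Suc)
    then show ?thesis using c2[OF True] by simp
  next
    case False
    then have e: "i mod M = M - 1" using Mpos
      by (metis Suc_lessI diff_Suc_1 mod_less_divisor)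
    then have "Suc i mod M = 0" using Mpos False by (simp add: mod_Suc)
    moreover have "last p = p ! (M - 1)" using pne M_def by (simp add: last_conv_nth)
    moreover have "hd p = p ! 0" using pne by (simp add: hd_conv_nth)
    ultimately show ?thesis using e c1 c3 by simp
  qed
  have inD: "p ! (i mod M) \<in> D" for i using setp Mpos M_def by auto
  define \<delta> where "\<delta> i = fst (p ! (i mod M))" for i
  define P where "P n = (\<Sum>j<n. \<delta> j)" for n
  define g where "g = P M"
  define s where "s n = P n mod q" for n
  have pair: "p ! (i mod M) = (\<delta> i, \<delta> (Suc i))" for i
    using nxt[of i] by (simp add: \<delta>_def prod_eq_iff)
  have drng: "0 \<le> \<delta> i \<and> \<delta> i < q" for i
    using rng[of "\<delta> i" "\<delta> (Suc i)"] inD[of i] pair[of i] by simp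
  have \<delta>per: "\<delta> (n + M) = \<delta> n" for n by (simp add: \<delta>_def)
  have Pper: "P (n + M) = P n + g" for n
  proof (induction n)
    case 0 then show ?case by (simp add: g_def P_def)
  next
    case (Suc n)
    have "P (Suc n + M) = P (n + M) + \<delta> (n + M)" by (simp add: P_def)
    also have "\<dots> = P n + g + \<delta> n" using Suc \<delta>per by simp
    also have "\<dots> = P (Suc n) + g" by (simp add: P_def)
    finally show ?case .
  qed
  have Pmul: "P (n + t * M) = P n + int t * g" for n t
  proof (induction t)
    case 0 then show ?case by simp
  next
    case (Suc t)
    have "P (n + Suc t * M) = P ((n + t * M) + M)" by (simp add: algebra_simps)
    also have "\<dots> = P n + int t * g + g" using Pper Suc by simp
    finally show ?case by (simp add: algebra_simps)
  qed
  have gD: "g = (\<Sum>e\<in>D. fst e)"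
  proof -
    have "g = (\<Sum>j<M. fst (p ! j))" by (simp add: g_def P_def \<delta>_def)
    also have "\<dots> = sum_list (map fst p)"
      by (simp add: sum_list_sum_nth M_def atLeast0LessThan)
    also have "\<dots> = (\<Sum>e\<in>set p. fst e)" using dist by (simp add: sum_list_distinct_conv_sum_set)
    finally show ?thesis using setp by simp
  qed
  have Pdecomp: "P i = P (i mod M) + int (i div M) * g" for i
    using Pmul[of "i mod M" "i div M"] by simp
  have dlt: "\<delta> i = (s (Suc i) - s i) mod q" for i
  proof -
    have "(s (Suc i) - s i) mod q = (P (Suc i) - P i) mod q" by (simp add: s_def mod_diff_eq)
    also have "\<dots> = \<delta> i mod q" by (simp add: P_def)
    also have "\<dots> = \<delta> i" using drng[of i] by simp
    finally show ?thesis by simp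
  qed
  have srng: "s i \<in> {0..<q}" for i using q2 by (simp add: s_def)
  define m where "m = nat q * M"
  have per: "s (i + m) = s i" for i
  proof -
    have "P (i + nat q * M) = P i + int (nat q) * g" by (rule Pmul)
    then have "P (i + m) = P i + q * g" using q2 by (simp add: m_def)
    then show ?thesis by (simp add: s_def)
  qed
  have mpos: "m > 0" using q2 Mpos by (simp add: m_def)
  have uniq: "i mod m = j mod m" if w: "window s 3 i = window s 3 j" for i j
  proof -
    from w have e0: "s i = s j" and e1: "s (Suc i) = s (Suc j)" and e2: "s (Suc (Suc i)) = s (Suc (Suc j))"
      by (simp_all add: win3)
    have "\<delta> i = \<delta> j" using dlt[of i] dlt[of j] e0 e1 by simp
    moreover have "\<delta> (Suc i) = \<delta> (Suc j)" using dlt[of "Suc i"] dlt[of "Suc j"] e1 e2 by simp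
    ultimately have "p ! (i mod M) = p ! (j mod M)" using pair by simp
    then have r: "i mod M = j mod M" using dist Mpos M_def by (simp add: nth_eq_iff_index_eq)
    have "(P (i mod M) + int (i div M) * g) mod q = (P (j mod M) + int (j div M) * g) mod q"
      using e0 Pdecomp[of i] Pdecomp[of j] by (simp add: s_def)
    then have "q dvd (P (i mod M) + int (i div M) * g) - (P (j mod M) + int (j div M) * g)"
      using mod_eq_dvd_iff by blast
    then have "q dvd (int (i div M) - int (j div M)) * g" using r by (simp add: algebra_simps)
    then have "q dvd (int (i div M) - int (j div M))"
      using cop gD by (metis coprime_commute coprime_dvd_mult_left_iff)
    then have "int (i div M) mod q = int (j div M) mod q" by (simp add: mod_eq_dvd_iff)
    then have "int (i div M) mod int (nat q) = int (j div M) mod int (nat q)" using q2 by simp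
    then have qq: "(i div M) mod nat q = (j div M) mod nat q" by (metis of_nat_eq_iff zmod_int)
    have "i mod (M * nat q) = M * (i div M mod nat q) + i mod M" by (rule mod_mult2_eq)
    moreover have "j mod (M * nat q) = M * (j div M mod nat q) + j mod M" by (rule mod_mult2_eq)
    ultimately show ?thesis using r qq by (simp add: m_def mult.commute)
  qed
  have norev: "window s 3 i \<noteq> rev (window s 3 j)" for i j
  proof
    assume w: "window s 3 i = rev (window s 3 j)"
    from w have e0: "s i = s (Suc (Suc j))" and e1: "s (Suc i) = s (Suc j)" and e2: "s (Suc (Suc i)) = s j"
      by (simp_all add: win3)
    have a: "\<delta> i = (- \<delta> (Suc j)) mod q"
    proof -
      have "\<delta> i = (s (Suc j) - s (Suc (Suc j))) mod q" using dlt[of i] e0 e1 by simp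
      also have "\<dots> = (- (s (Suc (Suc j)) - s (Suc j))) mod q" by simp
      also have "\<dots> = (- ((s (Suc (Suc j)) - s (Suc j)) mod q)) mod q" by (simp add: mod_minus_eq)
      finally show ?thesis using dlt[of "Suc j"] by simp
    qed
    have b: "\<delta> (Suc i) = (- \<delta> j) mod q"
    proof -
      have "\<delta> (Suc i) = (s j - s (Suc j)) mod q" using dlt[of "Suc i"] e1 e2 by simp
      also have "\<dots> = (- (s (Suc j) - s j)) mod q" by simp
      also have "\<dots> = (- ((s (Suc j) - s j) mod q)) mod q" by (simp add: mod_minus_eq)
      finally show ?thesis using dlt[of j] by simp
    qed
    have "(\<delta> j, \<delta> (Suc j)) \<in> D" using inD[of j] pair[of j] by simp
    moreover have "((- \<delta> (Suc j)) mod q, (- \<delta> j) mod q) \<in> D" using inD[of i] pair[of i] a b by simp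
    ultimately show False using orient by blast
  qed
  have nonrev: "window s 3 i \<noteq> rev (negq q (window s 3 j))" for i j
  proof
    assume w: "window s 3 i = rev (negq q (window s 3 j))"
    from w have e0: "s i = (- s (Suc (Suc j))) mod q" and e1: "s (Suc i) = (- s (Suc j)) mod q"
      and e2: "s (Suc (Suc i)) = (- s j) mod q"
      by (simp_all add: win3 negq_def)
    have a: "\<delta> i = \<delta> (Suc j)"
    proof -
      have "\<delta> i = ((- s (Suc j)) mod q - (- s (Suc (Suc j))) mod q) mod q" using dlt[of i] e0 e1 by simp
      also have "\<dots> = (- s (Suc j) - (- s (Suc (Suc j)))) mod q" by (simp add: mod_diff_eq)
      also have "\<dots> = (s (Suc (Suc j)) - s (Suc j)) mod q" by simp
      finally show ?thesis using dlt[of "Suc j"] by simp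
    qed
    have b: "\<delta> (Suc i) = \<delta> j"
    proof -
      have "\<delta> (Suc i) = ((- s j) mod q - (- s (Suc j)) mod q) mod q" using dlt[of "Suc i"] e1 e2 by simp
      also have "\<dots> = (- s j - (- s (Suc j))) mod q" by (simp add: mod_diff_eq)
      also have "\<dots> = (s (Suc j) - s j) mod q" by simp
      finally show ?thesis using dlt[of j] by simp
    qed
    have "(\<delta> j, \<delta> (Suc j)) \<in> D" using inD[of j] pair[of j] by simp
    moreover have "(\<delta> (Suc j), \<delta> j) \<in> D" using inD[of i] pair[of i] a b by simp
    ultimately show False using orient by blast
  qed
  have "is_SOS q 3 s m"
    unfolding is_SOS_def periodic_seq_def
    using mpos srng per uniq norev nonrev by blast
  then show ?thesis using cardD by (auto simp: m_def)
qed

definition Dq :: "int \<Rightarrow> (int \<times> int) set" where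
  "Dq q = Dp q - Tq q"

lemma T_facts:
  fixes q :: int
  assumes q: "q \<ge> 11"
  defines "b \<equiv> (q-1) div 4" and "c \<equiv> q - 2 - (q-1) div 4"
  shows "Tq q = {(1,b),(b,c),(c,1)}" "4*b \<le> q - 1" "q - 1 < 4*b + 4" "b \<ge> 2" "2*b + 6 < q" "c = q - 2 - b"
proof -
  have d: "q - 1 = 4 * b + (q-1) mod 4" "0 \<le> (q-1) mod 4" "(q-1) mod 4 < 4"
    unfolding b_def by simp_all
  show "Tq q = {(1,b),(b,c),(c,1)}" unfolding Tq_def b_def c_def ..
  show b1: "4*b \<le> q - 1" "q - 1 < 4*b + 4" "b \<ge> 2"
    using d q by linarith+
  show "2*b + 6 < q" using b1(1) q by presburger
  show "c = q - 2 - b" by (simp add: c_def b_def)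
qed

lemma card_T: "q \<ge> 11 \<Longrightarrow> card (Tq q) = 3"
  using T_facts[of q] by simp

lemma sum_T: "q \<ge> 11 \<Longrightarrow> (\<Sum>e\<in>Tq q. fst e) = q - 1"
  using T_facts[of q] by simp

lemma bal_T:
  assumes q: "q \<ge> 11"
  shows "card {e \<in> Tq q. snd e = v} = card {e \<in> Tq q. fst e = v}"
proof -
  define b where "b = (q-1) div 4"
  define c where "c = q - 2 - b"
  have T: "Tq q = {(1,b),(b,c),(c,1)}" and bb: "b \<ge> 2" "2*b + 6 < q"
    using T_facts[OF q] by (simp_all add: b_def c_def)
  have d: "1 \<noteq> b" "b \<noteq> c" "1 \<noteq> c" using bb by (auto simp: c_def)
  consider "v = 1" | "v = b" | "v = c" | "v \<noteq> 1 \<and> v \<noteq> b \<and> v \<noteq> c" by blast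
  then show ?thesis
  proof cases
    case 1
    have e1: "{e \<in> Tq q. snd e = v} = {(c,1)}" and e2: "{e \<in> Tq q. fst e = v} = {(1,b)}" unfolding T using d 1 by auto
    show ?thesis unfolding e1 e2 by simp
  next
    case 2
    have e1: "{e \<in> Tq q. snd e = v} = {(1,b)}" and e2: "{e \<in> Tq q. fst e = v} = {(b,c)}" unfolding T using d 2 by auto
    show ?thesis unfolding e1 e2 by simp
  next
    case 3
    have e1: "{e \<in> Tq q. snd e = v} = {(b,c)}" and e2: "{e \<in> Tq q. fst e = v} = {(c,1)}" unfolding T using d 3 by auto
    show ?thesis unfolding e1 e2 by simp
  next
    case 4
    have e1: "{e \<in> Tq q. snd e = v} = {}" and e2: "{e \<in> Tq q. fst e = v} = {}" unfolding T using d 4 by auto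
    show ?thesis unfolding e1 e2 by simp
  qed
qed

lemma bal_Dq:
  assumes q: "q \<ge> 11"
  shows "card {e \<in> Dq q. snd e = v} = card {e \<in> Dq q. fst e = v}"
proof -
  have q3: "q \<ge> 3" using q by simp
  have TD: "Tq q \<subseteq> Dp q" using T_sub[OF q] .
  have e: "{e \<in> Dq q. P e} = {e \<in> Dp q. P e} - {e \<in> Tq q. P e}" for P by (auto simp: Dq_def)
  have c: "card {e \<in> Dq q. P e} = card {e \<in> Dp q. P e} - card {e \<in> Tq q. P e}" for P
    unfolding e by (rule card_Diff_subset) (use TD T_facts[OF q] in auto)
  show ?thesis unfolding c using bal_Dp[OF q3, of v] bal_T[OF q, of v] by simp
qed

lemma adjE:
  assumes q: "q \<ge> 3" and r: "0 \<le> x" "x < q" "0 \<le> y" "y < q" and e: "inE q x y"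
    and t: "(x,y) \<notin> Tq q" "(y,x) \<notin> Tq q"
  shows "(x,y) \<in> Dq q \<or> (y,x) \<in> Dq q"
  using part[OF q r e] r t by (auto simp: Dq_def Dp_def)

lemma conn:
  assumes q: "q \<ge> 11" and v: "v \<in> fst ` Dq q \<union> snd ` Dq q"
  shows "v = 2 \<or> v = q - 3 \<or> (v,2) \<in> Dq q \<or> (2,v) \<in> Dq q \<or> (v,q-3) \<in> Dq q \<or> (q-3,v) \<in> Dq q"
proof (rule ccontr)
  assume na: "\<not> ?thesis"
  have q3: "q \<ge> 3" using q by simp
  define b where "b = (q-1) div 4"
  define c where "c = q - 2 - b"
  have T: "Tq q = {(1,b),(b,c),(c,1)}" and bb: "4*b \<le> q - 1" "q - 1 < 4*b + 4" "b \<ge> 2" "2*b + 6 < q"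
    using T_facts[OF q] by (simp_all add: b_def c_def)
  have rv: "0 \<le> v" "v < q" "\<not> bad q v" using v Dp_mem by (auto simp: Dq_def)
  define u where "u = av q v"
  have a2: "av q 2 = 2" "\<not> bad q 2" using q by (auto simp: av_def bad_def)
  have a3: "av q (q - 3) = 3" "\<not> bad q (q - 3)"
  proof -
    have m: "(q - 3) mod q = q - 3" using q by (intro modid) auto
    show "av q (q - 3) = 3" "\<not> bad q (q - 3)" unfolding av_def bad_def m using q by auto
  qed
  have T3: "(v, q-3) \<notin> Tq q" "(q-3, v) \<notin> Tq q" using T bb by (auto simp: c_def)
  have H2: "\<not> inE q v (q-3)"
    using adjE[OF q3 rv(1,2), of "q-3"] T3 na q by force
  then have F3: "u = 3 \<or> (q mod 4 = 1 \<and> (u + 1) div 2 = 2) \<or> (q mod 4 = 2 \<and> 6 + 2*u = q)"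
    using rv a3 unfolding inE_def u_def by auto
  have F2: "u = 2 \<or> (q mod 4 = 1 \<and> (u + 1) div 2 = 1) \<or> (q mod 4 = 2 \<and> 4 + 2*u = q) \<or> (b = 2 \<and> (u = 1 \<or> u = 4))"
  proof (cases "(v,2) \<in> Tq q \<or> (2,v) \<in> Tq q")
    case True
    then have bv: "b = 2" "v = 1 \<or> v = c" using T bb by (auto simp: c_def)
    have "av q 1 = 1" using q by (simp add: av_def)
    moreover have "av q c = 4"
    proof -
      have m: "c mod q = c" using bb by (intro modid) (auto simp: c_def)
      show ?thesis unfolding av_def m using bb bv by (auto simp: c_def)
    qed
    ultimately show ?thesis using bv by (auto simp: u_def)
  next
    case False
    then have "\<not> inE q v 2" using adjE[OF q3 rv(1,2), of 2] na q by force
    then show ?thesis using rv a2 unfolding inE_def u_def by auto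
  qed
  have b2: "b = 2 \<Longrightarrow> q mod 4 \<noteq> 1 \<and> q mod 4 \<noteq> 2" using bb(1,2) q by presburger
  from F2 show False
  proof (elim disjE conjE)
    assume "u = 2" then show False using F3 q by auto
  next
    assume "q mod 4 = 1" "(u + 1) div 2 = 1"
    then show False using F3 by auto
  next
    assume "q mod 4 = 2" "4 + 2 * u = q"
    then show False using F3 q by auto
  next
    assume "b = 2" "u = 1" then show False using F3 b2 by auto
  next
    assume "b = 2" "u = 4" then show False using F3 b2 by auto
  qed
qed

lemma hub:
  assumes q: "q \<ge> 11"
  shows "(2, q-3) \<in> Dq q \<or> (q-3, 2) \<in> Dq q"
proof -
  have q3: "q \<ge> 3" using q by simp
  have a2: "av q 2 = 2" "\<not> bad q 2" using q by (auto simp: av_def bad_def)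
  have a3: "av q (q - 3) = 3" "\<not> bad q (q - 3)"
  proof -
    have m: "(q - 3) mod q = q - 3" using q by (intro modid) auto
    show "av q (q - 3) = 3" "\<not> bad q (q - 3)" unfolding av_def bad_def m using q by auto
  qed
  have "inE q 2 (q-3)" using a2 a3 q unfolding inE_def by auto
  moreover have "(2, q-3) \<notin> Tq q" "(q-3, 2) \<notin> Tq q" using T_facts[OF q] by auto
  ultimately show ?thesis using adjE[OF q3, of 2 "q-3"] q by auto
qed

lemma arith_final:
  fixes q :: int
  assumes q: "q \<ge> 11"
  defines "h \<equiv> (q-1) div 2" and "cc \<equiv> (if q mod 4 = 1 \<or> q mod 4 = 2 then 2 else 1 :: int)"
  shows "q * (2*h*(h-cc) - 3) = (if q mod 4 = 0 then (q^3 - 6*q^2 + 2*q) div 2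
             else if q mod 4 = 1 then (q^3 - 6*q^2 - q) div 2
             else if q mod 4 = 2 then (q^3 - 8*q^2 + 6*q) div 2
             else (q^3 - 4*q^2 - 3*q) div 2)"
proof -
  define j where "j = q div 4"
  have "q mod 4 = 0 \<or> q mod 4 = 1 \<or> q mod 4 = 2 \<or> q mod 4 = 3" by presburger
  then consider (a) "q mod 4 = 0" | (b) "q mod 4 = 1" | (c) "q mod 4 = 2" | (d) "q mod 4 = 3" by blast
  then show ?thesis
  proof cases
    case a
    have qj: "q = 4*j" and hj: "h = 2*j - 1" using a unfolding j_def h_def by presburger+
    have "q^3 - 6*q^2 + 2*q = 2 * (q * (2*h*(h-cc) - 3))"
      using a unfolding qj hj cc_def by (simp add: power3_eq_cube power2_eq_square algebra_simps)
    then show ?thesis using a by simp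
  next
    case b
    have qj: "q = 4*j + 1" and hj: "h = 2*j" using b unfolding j_def h_def by presburger+
    have "q^3 - 6*q^2 - q = 2 * (q * (2*h*(h-cc) - 3))"
      using b unfolding qj hj cc_def by (simp add: power3_eq_cube power2_eq_square algebra_simps)
    then show ?thesis using b by simp
  next
    case c
    have qj: "q = 4*j + 2" and hj: "h = 2*j" using c unfolding j_def h_def by presburger+
    have "q^3 - 8*q^2 + 6*q = 2 * (q * (2*h*(h-cc) - 3))"
      using c unfolding qj hj cc_def by (simp add: power3_eq_cube power2_eq_square algebra_simps)
    then show ?thesis using c by simp
  next
    case d
    have qj: "q = 4*j + 3" and hj: "h = 2*j + 1" using d unfolding j_def h_def by presburger+
    have "q^3 - 4*q^2 - 3*q = 2 * (q * (2*h*(h-cc) - 3))"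
      using d unfolding qj hj cc_def by (simp add: power3_eq_cube power2_eq_square algebra_simps)
    then show ?thesis using d by simp
  qed
qed

theorem corollary5p3:
  fixes q :: int
  assumes "q \<ge> 11"
  shows "\<exists>s m. is_SOS q 3 s m \<and>
    int m = (if q mod 4 = 0 then (q^3 - 6*q^2 + 2*q) div 2
             else if q mod 4 = 1 then (q^3 - 6*q^2 - q) div 2
             else if q mod 4 = 2 then (q^3 - 8*q^2 + 6*q) div 2
             else (q^3 - 4*q^2 - 3*q) div 2)"
proof -
  have q: "q \<ge> 11" using assms .
  have q3: "q \<ge> 3" and q2: "q \<ge> 2" using q by simp_all
  define h where "h = (q-1) div 2"
  define cc :: int where "cc = (if q mod 4 = 1 \<or> q mod 4 = 2 then 2 else 1)"
  define D where "D = Dq q"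
  have DDp: "D \<subseteq> Dp q" by (auto simp: D_def Dq_def)
  have TD: "Tq q \<subseteq> Dp q" using T_sub[OF q] .
  have rng: "\<And>a b. (a,b) \<in> D \<Longrightarrow> 0 \<le> a \<and> a < q \<and> 0 \<le> b \<and> b < q"
    using DDp Dp_mem by blast
  have fin: "finite D" using fin_Dp[of q] DDp finite_subset by blast
  have hb: "(2, q-3) \<in> D \<or> (q-3, 2) \<in> D" using hub[OF q] by (simp add: D_def)
  have ne: "D \<noteq> {}" using hb by auto
  have bal: "\<And>v. card {e\<in>D. snd e = v} = card {e\<in>D. fst e = v}" using bal_Dq[OF q] by (simp add: D_def)
  have cn: "\<And>v. v \<in> fst ` D \<union> snd ` D \<Longrightarrow> v = 2 \<or> v = q-3 \<or> (v,2) \<in> D \<or> (2,v) \<in> D \<or> (v,q-3) \<in> D \<or> (q-3,v) \<in> D"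
    using conn[OF q] by (simp add: D_def)
  have orient: "(b,a) \<notin> D \<and> ((-b) mod q, (-a) mod q) \<notin> D" if ab: "(a,b) \<in> D" for a b
  proof -
    have d: "(a,b) \<in> Dp q" using ab DDp by auto
    then have r: "0 \<le> a" "a < q" "0 \<le> b" "b < q" and dd: "inD0 q a b \<or> inD4 q a b"
      by (auto simp: Dp_def)
    have "inE q a b" using DsubE[OF q3 r dd] .
    then have "\<not> (inD0 q b a \<or> inD4 q b a)" using part[OF q3 r] dd by blast
    then have "(b,a) \<notin> Dp q" by (auto simp: Dp_def)
    moreover have "((-b) mod q, (-a) mod q) \<notin> Dp q" using rprime[OF q3 r dd] by (auto simp: Dp_def)
    ultimately show ?thesis using DDp by auto
  qed
  have cEp: "int (card (Ep q)) = 4 * h * (h - cc)" using card_Ep[OF q] by (simp add: h_def cc_def)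
  have cDp: "int (card (Dp q)) = 2 * h * (h - cc)" using cEp card_Ep_Dp[OF q3] by simp
  have sDp: "(\<Sum>e\<in>Dp q. fst e) = q * (h * (h - cc))" using sum_Dp[OF q3] cDp by (simp add: algebra_simps)
  have sD: "(\<Sum>e\<in>D. fst e) = q * (h * (h - cc)) - (q - 1)"
    unfolding D_def Dq_def using sum_diff[OF fin_Dp TD, of fst] sDp sum_T[OF q] by simp
  have "(\<Sum>e\<in>D. fst e) = 1 + (h * (h - cc) - 1) * q" using sD by (simp add: algebra_simps)
  then have "(\<Sum>e\<in>D. fst e) mod q = 1" using q by simp
  then have cop: "coprime (\<Sum>e\<in>D. fst e) q"
    using coprime_mod_left_iff[of q "\<Sum>e\<in>D. fst e"] q by simp
  obtain s where s: "is_SOS q 3 s (nat q * card D)"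
    using euler_SOS[OF q2 rng fin ne bal hb cn orient cop] by blast
  have cD: "int (card D) = 2 * h * (h - cc) - 3"
  proof -
    have "card D = card (Dp q) - card (Tq q)" unfolding D_def Dq_def
      by (rule card_Diff_subset) (use TD T_facts[OF q] in auto)
    moreover have "card (Tq q) \<le> card (Dp q)" using TD fin_Dp by (rule card_mono[rotated])
    ultimately show ?thesis using cDp card_T[OF q] by simp
  qed
  have "int (nat q * card D) = q * (2*h*(h-cc) - 3)" using cD q by simp
  also have "\<dots> = (if q mod 4 = 0 then (q^3 - 6*q^2 + 2*q) div 2
             else if q mod 4 = 1 then (q^3 - 6*q^2 - q) div 2
             else if q mod 4 = 2 then (q^3 - 8*q^2 + 6*q) div 2
             else (q^3 - 4*q^2 - 3*q) div 2)" using arith_final[OF q] by (simp add: h_def cc_def)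
  finally show ?thesis using s by blast
qed


end
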